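(* For all integers $3\le s<t$ there is a positive constant $C$ depending only on $s$ such that for every integer $n\ge 2$, $$ f_{s-1,t-1}^{(2)}\big(\lfloor \sqrt{\log n}\rfloor\big) \le f_{s,t}^{(3)}(n) \le C\log n . $$
   Context: For integers $k\le s<t$ and $n\ge 0$, $f_{s,t}^{(k)}(n)$ is defined as $$ f_{s,t}^{(k)}(n)=\min_{\mathcal{G}} \max\{ |W| : W\subseteq V(\mathcal{G}) \text{ and the induced subhypergraph } \mathcal{G}[W] \text{ contains no copy of } K_s^{(k)}\}, $$ where the minimum is over all $k$-uniform hypergraphs $\mathcal{G}$ on $n$ vertices containing no copy of $K_t^{(k)}$, and $K_r^{(k)}$ denotes the complete $k$-uniform hypergraph on $r$ vertices (so for $k=2$, $K_r^{(2)}=K_r$ and $f^{(2)}_{s,t}$ concerns graphs). All logarithms are natural logarithms. *)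

theory Defs
  imports Complex_Main
begin

definition uniform_hypergraph :: "nat \<Rightarrow> nat \<Rightarrow> nat set set \<Rightarrow> bool" where
  "uniform_hypergraph k n E \<longleftrightarrow> (\<forall>e\<in>E. e \<subseteq> {..<n} \<and> card e = k)"

definition is_clique :: "nat \<Rightarrow> nat set set \<Rightarrow> nat set \<Rightarrow> bool" where
  "is_clique k E S \<longleftrightarrow> (\<forall>e. e \<subseteq> S \<and> card e = k \<longrightarrow> e \<in> E)"

definition clique_free :: "nat \<Rightarrow> nat \<Rightarrow> nat set set \<Rightarrow> nat set \<Rightarrow> bool" where
  "clique_free k r E W \<longleftrightarrow> \<not> (\<exists>S. S \<subseteq> W \<and> finite S \<and> card S = r \<and> is_clique k E S)"

definition max_free_set :: "nat \<Rightarrow> nat \<Rightarrow> nat \<Rightarrow> nat set set \<Rightarrow> nat" where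
  "max_free_set k s n E = Max {card W | W. W \<subseteq> {..<n} \<and> clique_free k s E W}"

definition erdos_rogers :: "nat \<Rightarrow> nat \<Rightarrow> nat \<Rightarrow> nat \<Rightarrow> nat" where
  "erdos_rogers k s t n =
     Min {max_free_set k s n E | E. uniform_hypergraph k n E \<and> clique_free k t E {..<n}}"

end

theory Submission
  imports Defs "HOL-Library.FuncSet"
begin


lemma card3_sorted:
  assumes "card (I::nat set) = 3"
  shows "\<exists>a b c. a<b \<and> b<c \<and> I = {a,b,c}"
proof -
  obtain x y z where I: "I = {x,y,z}" "x\<noteq>y" "y\<noteq>z" "x\<noteq>z" using assms card_3_iff by metis
  have h: "\<And>a b c. a<b \<Longrightarrow> b<c \<Longrightarrow> I = {a,b,c} \<Longrightarrow> ?thesis" by blast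
  consider "x<y" "y<z" | "x<z" "z<y" | "y<x" "x<z" | "y<z" "z<x" | "z<x" "x<y" | "z<y" "y<x"
    using I(2-4) by linarith
  then show ?thesis
  proof cases
    case 1 then show ?thesis using I by (intro h[of x y z]) auto
  next
    case 2 then show ?thesis using I by (intro h[of x z y]) auto
  next
    case 3 then show ?thesis using I by (intro h[of y x z]) auto
  next
    case 4 then show ?thesis using I by (intro h[of y z x]) auto
  next
    case 5 then show ?thesis using I by (intro h[of z x y]) auto
  next
    case 6 then show ?thesis using I by (intro h[of z y x]) auto
  qed
qed

lemma sorted3_eq:
  fixes a b c a' b' c' :: nat
  assumes "a<b" "b<c" "a'<b'" "b'<c'" "{a,b,c} = {a',b',c'}"
  shows "a=a' \<and> b=b' \<and> c=c'"
proof -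
  have "a \<in> {a',b',c'}" "b \<in> {a',b',c'}" "c \<in> {a',b',c'}"
       "a' \<in> {a,b,c}" "b' \<in> {a,b,c}" "c' \<in> {a,b,c}" using assms(5) by blast+
  then have 1: "a' \<le> a" "a \<le> a'" "c \<le> c'" "c' \<le> c" using assms(1-4) by auto
  then have "a = a'" "c = c'" by auto
  moreover have "b = b'" using \<open>b \<in> {a',b',c'}\<close> assms(1-4) 1 by auto
  ultimately show ?thesis by simp
qed

lemma pigeon:
  assumes "finite A" "finite B" "B \<noteq> {}" "f ` A \<subseteq> B"
  shows "\<exists>b\<in>B. card A \<le> card B * card {x\<in>A. f x = b}"
proof -
  define g where "g = (\<lambda>b. card {x\<in>A. f x = b})"
  have "A = (\<Union>b\<in>B. {x\<in>A. f x = b})" using assms(4) by auto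
  hence "card A \<le> (\<Sum>b\<in>B. g b)" unfolding g_def using card_UN_le[OF assms(2), of "\<lambda>b. {x\<in>A. f x = b}"] by simp
  moreover have "finite (g ` B)" "g ` B \<noteq> {}" using assms(2,3) by auto
  then obtain b where b: "b \<in> B" "g b = Max (g ` B)" using Max_in by (metis imageE)
  have "\<forall>b'\<in>B. g b' \<le> g b" using b(2) \<open>finite (g ` B)\<close> by simp
  moreover have "(\<Sum>b\<in>B. g b) \<le> card B * g b" using calculation(2) sum_bounded_above[of B g "g b"] by auto
  ultimately show ?thesis using b(1) unfolding g_def by (meson le_trans)
qed

lemma restr_sub: "f \<in> PiE A (\<lambda>_. K) \<Longrightarrow> B \<subseteq> A \<Longrightarrow> restrict f B \<in> PiE B (\<lambda>_. K)"
  by (auto simp: restrict_PiE_iff PiE_iff)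
lemma merge_PiE: "g \<in> PiE (A - D) (\<lambda>_. K) \<Longrightarrow> h \<in> PiE D (\<lambda>_. K) \<Longrightarrow> D \<subseteq> A \<Longrightarrow>
   (\<lambda>x. if x \<in> D then h x else g x) \<in> PiE A (\<lambda>_. K)"
  unfolding PiE_iff extensional_def by auto
lemma merge_restr: "g \<in> PiE (A - D) (\<lambda>_. K) \<Longrightarrow> h \<in> PiE D (\<lambda>_. K) \<Longrightarrow>
   restrict (\<lambda>x. if x \<in> D then h x else g x) (A - D) = g \<and> restrict (\<lambda>x. if x \<in> D then h x else g x) D = h"
  unfolding PiE_iff extensional_def restrict_def by (auto simp: fun_eq_iff)

lemma split_count:
  fixes A D :: "'a set" and K :: "'b set" and Q R :: "('a \<Rightarrow> 'b) \<Rightarrow> bool"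
  assumes "finite A" "D \<subseteq> A"
    and Qi: "\<And>f g. (\<forall>x\<in>A-D. f x = g x) \<Longrightarrow> Q f = Q g"
    and Ri: "\<And>f g. (\<forall>x\<in>D. f x = g x) \<Longrightarrow> R f = R g"
  shows "card {f\<in>PiE A (\<lambda>_. K). Q f \<and> R f} * card (PiE D (\<lambda>_. K))
       = card {f\<in>PiE A (\<lambda>_. K). Q f} * card {h\<in>PiE D (\<lambda>_. K). R h}"
proof -
  define B where "B = A - D"
  define \<Phi> where "\<Phi> = (\<lambda>f::'a\<Rightarrow>'b. (restrict f B, restrict f D))"
  have inj: "inj_on \<Phi> (PiE A (\<lambda>_. K))"
  proof (rule inj_onI)
    fix f g assume f: "f \<in> PiE A (\<lambda>_. K)" and g: "g \<in> PiE A (\<lambda>_. K)" and e: "\<Phi> f = \<Phi> g"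
    show "f = g"
    proof (rule ext)
      fix x
      show "f x = g x"
      proof (cases "x \<in> A")
        case True
        then show ?thesis using e unfolding \<Phi>_def B_def
          by (metis (no_types, lifting) Diff_iff prod.inject restrict_apply')
      next
        case False
        then show ?thesis using f g by (metis PiE_arb)
      qed
    qed
  qed
  have QB: "Q f = Q (restrict f B)" for f by (rule Qi) (auto simp: B_def)
  have RD: "R f = R (restrict f D)" for f by (rule Ri) auto
  have QM: "Q (\<lambda>x. if x \<in> D then h x else g x) = Q g" if "g \<in> PiE B (\<lambda>_. K)" for g h
    using that by (intro Qi) (auto simp: B_def)
  have RM: "R (\<lambda>x. if x \<in> D then h x else g x) = R h" for g h
    by (intro Ri) auto
  have sub: "B \<subseteq> A" "D \<subseteq> A" using assms(2) by (auto simp: B_def)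
  have im1: "\<Phi> ` {f\<in>PiE A (\<lambda>_. K). Q f \<and> R f} = {g\<in>PiE B (\<lambda>_. K). Q g} \<times> {h\<in>PiE D (\<lambda>_. K). R h}"
  proof
    show "\<Phi> ` {f\<in>PiE A (\<lambda>_. K). Q f \<and> R f} \<subseteq> {g\<in>PiE B (\<lambda>_. K). Q g} \<times> {h\<in>PiE D (\<lambda>_. K). R h}"
    proof
      fix p assume "p \<in> \<Phi> ` {f\<in>PiE A (\<lambda>_. K). Q f \<and> R f}"
      then obtain f where f: "f \<in> PiE A (\<lambda>_. K)" "Q f" "R f" "p = \<Phi> f" by blast
      show "p \<in> {g\<in>PiE B (\<lambda>_. K). Q g} \<times> {h\<in>PiE D (\<lambda>_. K). R h}"
        using restr_sub[OF f(1) sub(1)] restr_sub[OF f(1) sub(2)] f(2,3,4) QB[of f] RD[of f]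
        unfolding \<Phi>_def by blast
    qed
    show "{g\<in>PiE B (\<lambda>_. K). Q g} \<times> {h\<in>PiE D (\<lambda>_. K). R h} \<subseteq> \<Phi> ` {f\<in>PiE A (\<lambda>_. K). Q f \<and> R f}"
    proof
      fix p assume "p \<in> {g\<in>PiE B (\<lambda>_. K). Q g} \<times> {h\<in>PiE D (\<lambda>_. K). R h}"
      then obtain g h where p: "p = (g,h)" "g \<in> PiE B (\<lambda>_. K)" "Q g" "h\<in>PiE D (\<lambda>_. K)" "R h" by blast
      let ?f = "\<lambda>x. if x \<in> D then h x else g x"
      have "?f \<in> PiE A (\<lambda>_. K)" using merge_PiE[of g A D K h] p(2,4) assms(2) B_def by blast
      moreover have "\<Phi> ?f = (g,h)" using merge_restr[of g A D K h] p(2,4) unfolding B_def \<Phi>_def by simp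
      moreover have "Q ?f" "R ?f" using QM[OF p(2)] RM p(3,5) by auto
      ultimately have "?f \<in> {f\<in>PiE A (\<lambda>_. K). Q f \<and> R f}" "p = \<Phi> ?f" using p(1) by auto
      then show "p \<in> \<Phi> ` {f\<in>PiE A (\<lambda>_. K). Q f \<and> R f}" by blast
    qed
  qed
  have im2: "\<Phi> ` {f\<in>PiE A (\<lambda>_. K). Q f} = {g\<in>PiE B (\<lambda>_. K). Q g} \<times> PiE D (\<lambda>_. K)"
  proof
    show "\<Phi> ` {f\<in>PiE A (\<lambda>_. K). Q f} \<subseteq> {g\<in>PiE B (\<lambda>_. K). Q g} \<times> PiE D (\<lambda>_. K)"
    proof
      fix p assume "p \<in> \<Phi> ` {f\<in>PiE A (\<lambda>_. K). Q f}"
      then obtain f where f: "f \<in> PiE A (\<lambda>_. K)" "Q f" "p = \<Phi> f" by blast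
      show "p \<in> {g\<in>PiE B (\<lambda>_. K). Q g} \<times> PiE D (\<lambda>_. K)"
        using restr_sub[OF f(1) sub(1)] restr_sub[OF f(1) sub(2)] f(2,3) QB[of f]
        unfolding \<Phi>_def by blast
    qed
    show "{g\<in>PiE B (\<lambda>_. K). Q g} \<times> PiE D (\<lambda>_. K) \<subseteq> \<Phi> ` {f\<in>PiE A (\<lambda>_. K). Q f}"
    proof
      fix p assume "p \<in> {g\<in>PiE B (\<lambda>_. K). Q g} \<times> PiE D (\<lambda>_. K)"
      then obtain g h where p: "p = (g,h)" "g \<in> PiE B (\<lambda>_. K)" "Q g" "h\<in>PiE D (\<lambda>_. K)" by blast
      let ?f = "\<lambda>x. if x \<in> D then h x else g x"
      have "?f \<in> PiE A (\<lambda>_. K)" using merge_PiE[of g A D K h] p(2,4) assms(2) B_def by blast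
      moreover have "\<Phi> ?f = (g,h)" using merge_restr[of g A D K h] p(2,4) unfolding B_def \<Phi>_def by simp
      moreover have "Q ?f" using QM[OF p(2)] p(3) by auto
      ultimately have "?f \<in> {f\<in>PiE A (\<lambda>_. K). Q f}" "p = \<Phi> ?f" using p(1) by auto
      then show "p \<in> \<Phi> ` {f\<in>PiE A (\<lambda>_. K). Q f}" by blast
    qed
  qed
  have c1: "card {f\<in>PiE A (\<lambda>_. K). Q f \<and> R f} = card {g\<in>PiE B (\<lambda>_. K). Q g} * card {h\<in>PiE D (\<lambda>_. K). R h}"
  proof -
    have "card {f\<in>PiE A (\<lambda>_. K). Q f \<and> R f} = card (\<Phi> ` {f\<in>PiE A (\<lambda>_. K). Q f \<and> R f})"
      by (rule card_image[symmetric], rule inj_on_subset[OF inj]) blast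
    then show ?thesis unfolding im1 card_cartesian_product .
  qed
  have c2: "card {f\<in>PiE A (\<lambda>_. K). Q f} = card {g\<in>PiE B (\<lambda>_. K). Q g} * card (PiE D (\<lambda>_. K))"
  proof -
    have "card {f\<in>PiE A (\<lambda>_. K). Q f} = card (\<Phi> ` {f\<in>PiE A (\<lambda>_. K). Q f})"
      by (rule card_image[symmetric], rule inj_on_subset[OF inj]) blast
    then show ?thesis unfolding im2 card_cartesian_product .
  qed
  show ?thesis using c1 c2 by simp
qed
lemma count_indep:
  fixes D :: "'t \<Rightarrow> 'a set" and G :: "'t \<Rightarrow> ('a \<Rightarrow> 'b) \<Rightarrow> bool" and K :: "'b set"
  assumes "finite A" "finite T" "finite K" "K \<noteq> {}"
   "\<And>\<tau>. \<tau>\<in>T \<Longrightarrow> D \<tau> \<subseteq> A"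
   "\<And>\<tau> \<tau>'. \<tau>\<in>T \<Longrightarrow> \<tau>'\<in>T \<Longrightarrow> \<tau>\<noteq>\<tau>' \<Longrightarrow> D \<tau> \<inter> D \<tau>' = {}"
   "\<And>\<tau> f g. \<tau>\<in>T \<Longrightarrow> (\<forall>x\<in>D \<tau>. f x = g x) \<Longrightarrow> G \<tau> f = G \<tau> g"
   "\<And>\<tau>. \<tau>\<in>T \<Longrightarrow> real (card {h\<in>PiE (D \<tau>) (\<lambda>_. K). \<not> G \<tau> h}) \<le> \<rho> * real (card (PiE (D \<tau>) (\<lambda>_. K)))"
  shows "real (card {f\<in>PiE A (\<lambda>_. K). \<forall>\<tau>\<in>T. \<not> G \<tau> f}) \<le> real (card (PiE A (\<lambda>_. K))) * \<rho> ^ card T"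
  using assms(2,5-8)
proof (induction T rule: finite_induct)
  case empty
  show ?case by simp
next
  case (insert \<tau> T)
  let ?N = "\<lambda>T. card {f\<in>PiE A (\<lambda>_. K). \<forall>\<tau>\<in>T. \<not> G \<tau> f}"
  have IH: "real (?N T) \<le> real (card (PiE A (\<lambda>_. K))) * \<rho> ^ card T"
    apply (rule insert.IH)
       apply (rule insert.prems(1); simp)
      apply (rule insert.prems(2); simp)
     apply (rule insert.prems(3); simp)
    apply (rule insert.prems(4); simp)
    done
  have Dsub: "D \<tau> \<subseteq> A" by (rule insert.prems(1)) simp
  have sc: "card {f\<in>PiE A (\<lambda>_. K). (\<forall>\<tau>'\<in>T. \<not> G \<tau>' f) \<and> \<not> G \<tau> f} * card (PiE (D \<tau>) (\<lambda>_. K))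
       = card {f\<in>PiE A (\<lambda>_. K). (\<forall>\<tau>'\<in>T. \<not> G \<tau>' f)} * card {h\<in>PiE (D \<tau>) (\<lambda>_. K). \<not> G \<tau> h}"
  proof (rule split_count[OF assms(1) Dsub])
    fix f g :: "'a \<Rightarrow> 'b"
    assume fg: "\<forall>x\<in>A - D \<tau>. f x = g x"
    have "G \<tau>' f = G \<tau>' g" if "\<tau>' \<in> T" for \<tau>'
    proof -
      have "\<tau>' \<noteq> \<tau>" using that insert.hyps(2) by blast
      then have "D \<tau>' \<inter> D \<tau> = {}" using insert.prems(2)[of \<tau>' \<tau>] that by blast
      moreover have "D \<tau>' \<subseteq> A" using insert.prems(1) that by blast
      ultimately have "\<forall>x\<in>D \<tau>'. f x = g x" using fg by blast
      moreover have mem: "\<tau>' \<in> insert \<tau> T" using that by simp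
      ultimately show ?thesis by (rule insert.prems(3)[rotated])
    qed
    then show "(\<forall>\<tau>'\<in>T. \<not> G \<tau>' f) = (\<forall>\<tau>'\<in>T. \<not> G \<tau>' g)" by blast
  next
    fix f g :: "'a \<Rightarrow> 'b"
    assume "\<forall>x\<in>D \<tau>. f x = g x"
    then have "G \<tau> f = G \<tau> g" by (rule insert.prems(3)[OF insertI1])
    then show "(\<not> G \<tau> f) = (\<not> G \<tau> g)" by simp
  qed
  have eqset: "{f\<in>PiE A (\<lambda>_. K). \<forall>\<tau>'\<in>insert \<tau> T. \<not> G \<tau>' f} = {f\<in>PiE A (\<lambda>_. K). (\<forall>\<tau>'\<in>T. \<not> G \<tau>' f) \<and> \<not> G \<tau> f}"
    by blast
  define cP where "cP = card (PiE (D \<tau>) (\<lambda>_. K))"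
  have cPpos: "cP > 0" unfolding cP_def
    using assms(3,4) finite_subset[OF Dsub assms(1)] by (simp add: card_PiE card_gt_0_iff)
  have hR: "real (card {h\<in>PiE (D \<tau>) (\<lambda>_. K). \<not> G \<tau> h}) \<le> \<rho> * real cP"
    using insert.prems(4)[OF insertI1] unfolding cP_def .
  have "0 \<le> \<rho> * real cP" using hR of_nat_0_le_iff order_trans by blast
  then have rho0: "\<rho> \<ge> 0" using cPpos by (simp add: zero_le_mult_iff)
  have e: "?N (insert \<tau> T) * cP = ?N T * card {h\<in>PiE (D \<tau>) (\<lambda>_. K). \<not> G \<tau> h}"
    using sc unfolding eqset cP_def .
  have "real (?N (insert \<tau> T)) * real cP = real (?N T) * real (card {h\<in>PiE (D \<tau>) (\<lambda>_. K). \<not> G \<tau> h})"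
    by (simp only: of_nat_mult[symmetric] e)
  also have "\<dots> \<le> real (?N T) * (\<rho> * real cP)" using hR by (rule mult_left_mono) simp
  also have "\<dots> = (real (?N T) * \<rho>) * real cP" by (simp only: mult.assoc)
  finally have "real (?N (insert \<tau> T)) \<le> real (?N T) * \<rho>"
    using cPpos by (simp only: mult_le_cancel_right_pos of_nat_0_less_iff)
  also have "\<dots> \<le> real (card (PiE A (\<lambda>_. K))) * \<rho> ^ card T * \<rho>"
    using IH rho0 by (rule mult_right_mono)
  also have "\<dots> = real (card (PiE A (\<lambda>_. K))) * \<rho> ^ card (insert \<tau> T)"
    using insert.hyps by (simp add: mult.assoc)
  finally show ?case .
qed


definition inv_gr :: "nat set set \<Rightarrow> nat list \<Rightarrow> nat set \<Rightarrow> bool" where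
 "inv_gr H vs S \<longleftrightarrow> (\<forall>j l. j < l \<longrightarrow> l < length vs \<longrightarrow>
    (\<forall>x\<in>S \<union> {vs!p |p. l<p \<and> p<length vs}. \<forall>y\<in>S \<union> {vs!p |p. l<p \<and> p<length vs}.
       ({vs!j, vs!l, x} \<in> H \<longleftrightarrow> {vs!j, vs!l, y} \<in> H)))"

lemma inv_grD:
  assumes "inv_gr H vs S" "j < l" "l < length vs"
    "x \<in> S \<union> {vs!p |p. l<p \<and> p<length vs}" "y \<in> S \<union> {vs!p |p. l<p \<and> p<length vs}"
  shows "({vs!j, vs!l, x} \<in> H) = ({vs!j, vs!l, y} \<in> H)"
proof -
  have A: "\<forall>j l. j < l \<longrightarrow> l < length vs \<longrightarrow>
    (\<forall>x\<in>S \<union> {vs!p |p. l<p \<and> p<length vs}. \<forall>y\<in>S \<union> {vs!p |p. l<p \<and> p<length vs}.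
       ({vs!j, vs!l, x} \<in> H \<longleftrightarrow> {vs!j, vs!l, y} \<in> H))"
    using assms(1) unfolding inv_gr_def .
  show ?thesis using A[rule_format, OF assms(2,3,4,5)] .
qed

lemma greedy_step:
  assumes fin: "finite S" and c2: "card S \<ge> 2" and inv: "inv_gr H vs S" and dj: "set vs \<inter> S = {}"
  shows "\<exists>v S'. v \<in> S \<and> S' \<subseteq> S - {v} \<and> inv_gr H (vs@[v]) S' \<and> card S \<le> card S' * 2^(Suc (length vs))"
proof -
  obtain v where v: "v \<in> S" using c2 by fastforce
  define S0 where "S0 = S - {v}"
  define len where "len = length vs"
  define \<phi> where "\<phi> = (\<lambda>x. {j. j < len \<and> {vs!j, v, x} \<in> H})"
  have fS0: "finite S0" using fin by (simp add: S0_def)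
  have cS0: "card S0 = card S - 1" using v fin by (simp add: S0_def)
  have im: "\<phi> ` S0 \<subseteq> Pow {..<len}" unfolding \<phi>_def by auto
  obtain c where c: "c \<in> Pow {..<len}" "card S0 \<le> card (Pow {..<len}) * card {x\<in>S0. \<phi> x = c}"
    using pigeon[OF fS0 _ _ im] by blast
  define S' where "S' = {x\<in>S0. \<phi> x = c}"
  have cP: "card (Pow {..<len}) = 2^len" by (simp add: card_Pow)
  have card: "card S \<le> card S' * 2^(Suc len)"
  proof -
    have "card S \<le> 2 * card S0" using cS0 c2 by linarith
    also have "\<dots> \<le> 2 * (2^len * card S')" using c(2) cP unfolding S'_def by simp
    finally show ?thesis by (simp add: algebra_simps)
  qed
  have sub: "S' \<subseteq> S - {v}" unfolding S'_def S0_def by blast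
  have inv': "inv_gr H (vs@[v]) S'"
    unfolding inv_gr_def
  proof (intro allI impI ballI)
    fix j l x y
    assume jl: "j < l" and l: "l < length (vs@[v])"
      and x: "x \<in> S' \<union> {(vs@[v])!p |p. l<p \<and> p<length (vs@[v])}"
      and y: "y \<in> S' \<union> {(vs@[v])!p |p. l<p \<and> p<length (vs@[v])}"
    have j': "(vs@[v])!j = vs!j" using jl l by (simp add: nth_append)
    show "({(vs@[v])!j, (vs@[v])!l, x} \<in> H) = ({(vs@[v])!j, (vs@[v])!l, y} \<in> H)"
    proof (cases "l < len")
      case True
      have l': "(vs@[v])!l = vs!l" using True len_def by (simp add: nth_append)
      have T: "S' \<union> {(vs@[v])!p |p. l<p \<and> p<length (vs@[v])} \<subseteq> S \<union> {vs!p |p. l<p \<and> p<length vs}"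
      proof
        fix z assume "z \<in> S' \<union> {(vs@[v])!p |p. l<p \<and> p<length (vs@[v])}"
        then consider "z \<in> S'" | p where "l<p" "p<length (vs@[v])" "z = (vs@[v])!p" by blast
        then show "z \<in> S \<union> {vs!p |p. l<p \<and> p<length vs}"
        proof cases
          case 1 then show ?thesis using sub by blast
        next
          case 2
          show ?thesis
          proof (cases "p < length vs")
            case True then show ?thesis using 2 by (auto simp: nth_append)
          next
            case False then have "p = length vs" using 2 by simp
            then show ?thesis using 2 v by simp
          qed
        qed
      qed
      have "l < length vs" using True len_def by simp
      from inv_grD[OF inv jl this subsetD[OF T x] subsetD[OF T y]] show ?thesis unfolding j' l' .
    next
      case False
      then have ll: "l = len" using l len_def by simp
      have l': "(vs@[v])!l = v" using ll len_def by simp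
      have "{(vs@[v])!p |p. l<p \<and> p<length (vs@[v])} = {}" using ll len_def by auto
      then have xy: "x \<in> S'" "y \<in> S'" using x y by auto
      then have "\<phi> x = \<phi> y" unfolding S'_def by simp
      moreover have "j < len" using jl ll by simp
      ultimately have "j \<in> \<phi> x \<longleftrightarrow> j \<in> \<phi> y" by simp
      then show ?thesis unfolding j' l' using \<open>j < len\<close> unfolding \<phi>_def by simp
    qed
  qed
  show ?thesis using v sub inv' card len_def by blast
qed

definition tri :: "nat \<Rightarrow> nat" where "tri i = (\<Sum>p<i. Suc p)"

lemma tri_Suc: "tri (Suc i) = tri i + Suc i" unfolding tri_def by simp

lemma tri_mono: "i \<le> L \<Longrightarrow> tri i \<le> tri L"
  unfolding tri_def by (rule sum_mono2) auto

lemma tri_le: "tri i \<le> i * i"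
proof -
  have "tri i \<le> (\<Sum>p<i. i)" unfolding tri_def by (rule sum_mono) auto
  then show ?thesis by simp
qed

lemma greedy:
  assumes fV: "finite V" and iL: "i \<le> L" and big: "2 * 2^(tri L) \<le> card V"
  shows "\<exists>vs S. length vs = i \<and> distinct vs \<and> set vs \<subseteq> V \<and> S \<subseteq> V \<and> set vs \<inter> S = {}
     \<and> card V \<le> card S * 2^(tri i) \<and> inv_gr H vs S"
  using iL
proof (induction i)
  case 0
  have "inv_gr H [] V" unfolding inv_gr_def by simp
  then show ?case by (intro exI[of _ "[]"] exI[of _ V]) (simp add: tri_def)
next
  case (Suc i)
  then obtain vs S where vs: "length vs = i" "distinct vs" "set vs \<subseteq> V" "S \<subseteq> V" "set vs \<inter> S = {}"
    "card V \<le> card S * 2^(tri i)" "inv_gr H vs S" by auto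
  have fS: "finite S" using vs(4) fV finite_subset by blast
  have "(2::nat) * 2^(tri i) \<le> 2 * 2^(tri L)" using tri_mono[of i L] Suc.prems by simp
  also have "\<dots> \<le> card S * 2^(tri i)" using big vs(6) by linarith
  finally have c2: "2 \<le> card S" by simp
  obtain v S' where v: "v \<in> S" "S' \<subseteq> S - {v}" "inv_gr H (vs@[v]) S'" "card S \<le> card S' * 2^(Suc (length vs))"
    using greedy_step[OF fS c2 vs(7) vs(5)] by blast
  have "card V \<le> card S * 2^(tri i)" by (rule vs(6))
  also have "\<dots> \<le> card S' * 2^(Suc i) * 2^(tri i)" using v(4) vs(1) by simp
  also have "\<dots> = card S' * 2^(tri (Suc i))" by (simp add: tri_Suc power_add)
  finally have cV: "card V \<le> card S' * 2^(tri (Suc i))" .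
  have "length (vs@[v]) = Suc i" using vs(1) by simp
  moreover have "distinct (vs@[v])" using vs(2,5) v(1) by auto
  moreover have "set (vs@[v]) \<subseteq> V" using vs(3,4) v(1) by auto
  moreover have "S' \<subseteq> V" using vs(4) v(2) by auto
  moreover have "set (vs@[v]) \<inter> S' = {}" using vs(5) v(2) by auto
  ultimately show ?case using cV v(3) by blast
qed


lemma card2_sorted:
  assumes "card (I::nat set) = 2"
  shows "\<exists>a b. a<b \<and> I = {a,b}"
proof -
  obtain x y where I: "I = {x,y}" "x\<noteq>y" using assms card_2_iff by metis
  show ?thesis
  proof (cases "x<y")
    case True then show ?thesis using I by blast
  next
    case False then have "y<x" using I(2) by simp
    then show ?thesis using I by (intro exI[of _ y] exI[of _ x]) auto
  qed
qed

lemma pair_sorted_eq: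
  fixes a b i j :: nat
  assumes "a<b" "i<j" "{a,b} = {i,j}"
  shows "a = i \<and> b = j"
proof -
  have "a \<in> {i,j}" "b \<in> {i,j}" "i \<in> {a,b}" "j \<in> {a,b}" using assms(3) by blast+
  then show ?thesis using assms(1,2) by auto
qed

lemma fin_mfs: "finite {card W | W. W \<subseteq> {..<n} \<and> clique_free k s E W}"
proof -
  have "{card W | W. W \<subseteq> {..<n} \<and> clique_free k s E W} \<subseteq> card ` Pow {..<n}" by auto
  then show ?thesis by (rule finite_subset) simp
qed

lemma mfs_ge:
  assumes "W \<subseteq> {..<n}" "clique_free k s E W"
  shows "card W \<le> max_free_set k s n E"
  unfolding max_free_set_def using assms by (intro Max_ge[OF fin_mfs]) blast

lemma mfs_le_n: "s \<ge> 1 \<Longrightarrow> max_free_set k s n E \<le> n"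
proof -
  assume s: "s \<ge> 1"
  have "clique_free k s E {}" unfolding clique_free_def using s by auto
  then have ne: "{card W | W. W \<subseteq> {..<n} \<and> clique_free k s E W} \<noteq> {}" by blast
  have "\<forall>x\<in>{card W | W. W \<subseteq> {..<n} \<and> clique_free k s E W}. x \<le> n"
  proof
    fix x assume "x \<in> {card W | W. W \<subseteq> {..<n} \<and> clique_free k s E W}"
    then obtain W where "x = card W" "W \<subseteq> {..<n}" by blast
    then show "x \<le> n" using card_mono[of "{..<n}" W] by simp
  qed
  then show ?thesis unfolding max_free_set_def using Max_le_iff[OF fin_mfs ne] by blast
qed

lemma mfs_obtain:
  assumes "s \<ge> 1"
  shows "\<exists>W. W \<subseteq> {..<n} \<and> clique_free k s E W \<and> card W = max_free_set k s n E"
proof -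
  have "clique_free k s E {}" unfolding clique_free_def using assms by auto
  then have ne: "{card W | W. W \<subseteq> {..<n} \<and> clique_free k s E W} \<noteq> {}" by blast
  have "Max {card W | W. W \<subseteq> {..<n} \<and> clique_free k s E W} \<in> {card W | W. W \<subseteq> {..<n} \<and> clique_free k s E W}"
    by (rule Max_in[OF fin_mfs ne])
  then obtain W where "Max {card W | W. W \<subseteq> {..<n} \<and> clique_free k s E W} = card W"
     "W \<subseteq> {..<n}" "clique_free k s E W" by blast
  then show ?thesis unfolding max_free_set_def by metis
qed

lemma fin_er: "finite {max_free_set k s n E | E. uniform_hypergraph k n E \<and> clique_free k t E {..<n}}"
proof -
  have "{max_free_set k s n E | E. uniform_hypergraph k n E \<and> clique_free k t E {..<n}}
     \<subseteq> (max_free_set k s n) ` Pow (Pow {..<n})"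
  proof
    fix x assume "x \<in> {max_free_set k s n E | E. uniform_hypergraph k n E \<and> clique_free k t E {..<n}}"
    then obtain E where E: "x = max_free_set k s n E" "uniform_hypergraph k n E" by blast
    then have "E \<in> Pow (Pow {..<n})" unfolding uniform_hypergraph_def by blast
    then show "x \<in> (max_free_set k s n) ` Pow (Pow {..<n})" using E(1) by blast
  qed
  then show ?thesis by (rule finite_subset) simp
qed

lemma er_le:
  assumes "uniform_hypergraph k n E" "clique_free k t E {..<n}"
  shows "erdos_rogers k s t n \<le> max_free_set k s n E"
  unfolding erdos_rogers_def using assms by (intro Min_le[OF fin_er]) blast

lemma er_ge:
  assumes "k \<le> t" "\<And>E. uniform_hypergraph k n E \<Longrightarrow> clique_free k t E {..<n} \<Longrightarrow> X \<le> max_free_set k s n E"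
  shows "X \<le> erdos_rogers k s t n"
proof -
  have "uniform_hypergraph k n {}" unfolding uniform_hypergraph_def by simp
  moreover have "clique_free k t {} {..<n}"
  proof -
    have "\<not> is_clique k {} S" if "finite S" "card S = t" for S
    proof -
      have "k \<le> card S" using that assms(1) by simp
      then obtain e where e: "e \<subseteq> S" "card e = k" by (rule obtain_subset_with_card_n)
      then show ?thesis unfolding is_clique_def by auto
    qed
    then show ?thesis unfolding clique_free_def by auto
  qed
  ultimately have "max_free_set k s n {} \<in> {max_free_set k s n E | E. uniform_hypergraph k n E \<and> clique_free k t E {..<n}}"
    by (intro CollectI exI[of _ "{}"]) simp
  then have ne: "{max_free_set k s n E | E. uniform_hypergraph k n E \<and> clique_free k t E {..<n}} \<noteq> {}" by auto
  have "\<forall>a\<in>{max_free_set k s n E | E. uniform_hypergraph k n E \<and> clique_free k t E {..<n}}. X \<le> a"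
  proof
    fix a assume "a \<in> {max_free_set k s n E | E. uniform_hypergraph k n E \<and> clique_free k t E {..<n}}"
    then obtain E where "a = max_free_set k s n E" "uniform_hypergraph k n E" "clique_free k t E {..<n}" by blast
    then show "X \<le> a" using assms(2)[of E] by simp
  qed
  then show ?thesis unfolding erdos_rogers_def using Min_ge_iff[OF fin_er ne] by simp
qed


lemma lower_main:
  fixes H :: "nat set set"
  assumes unifH: "uniform_hypergraph 3 n H" and freeH: "clique_free 3 t H {..<n}"
    and s3: "3 \<le> s" and st: "s < t" and big: "2 * 2^(tri m) \<le> n"
  shows "erdos_rogers 2 (s-1) (t-1) m \<le> max_free_set 3 s n H"
proof -
  obtain vs S where vs: "length vs = m" "distinct vs" "set vs \<subseteq> {..<n}" "S \<subseteq> {..<n}" "set vs \<inter> S = {}"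
     "card {..<n} \<le> card S * 2^(tri m)" "inv_gr H vs S"
    using greedy[of "{..<n}" m m H] big by auto
  have "S \<noteq> {}"
  proof
    assume "S = {}"
    then show False using vs(6) big by simp
  qed
  then obtain u where u: "u \<in> S" by auto
  define v where "v = (\<lambda>i. (vs@[u])!i)"
  have dist: "distinct (vs@[u])" using vs(2,5) u by auto
  have vinj: "inj_on v {..m}"
  proof (rule inj_onI)
    fix i j assume "i \<in> {..m}" "j \<in> {..m}" "v i = v j"
    then show "i = j" using dist vs(1) unfolding v_def by (simp add: nth_eq_iff_index_eq)
  qed
  have vlt: "v i < n" if "i \<le> m" for i
  proof -
    have "v i \<in> set (vs@[u])" unfolding v_def using that vs(1) by (intro nth_mem) simp
    then show ?thesis using vs(3,4) u by auto
  qed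
  have vm: "v m = u" unfolding v_def using vs(1) by (simp add: nth_append)
  have vsm: "v i = vs!i" if "i < m" for i unfolding v_def using that vs(1) by (simp add: nth_append)
  have key: "({v j, v l, v p} \<in> H) = ({v j, v l, v m} \<in> H)" if jl: "j < l" and lp: "l < p" and pm: "p \<le> m" for j l p
  proof -
    have lm: "l < m" using lp pm by simp
    have jm: "j < m" using jl lm by simp
    have m1: "v p \<in> S \<union> {vs!q |q. l<q \<and> q<length vs}"
    proof (cases "p < m")
      case True then show ?thesis using vsm[of p] lp vs(1) by auto
    next
      case False then have "p = m" using pm by simp
      then show ?thesis using vm u by simp
    qed
    have m2: "v m \<in> S \<union> {vs!q |q. l<q \<and> q<length vs}" using vm u by simp
    have "l < length vs" using lm vs(1) by simp
    from inv_grD[OF vs(7) jl this m1 m2] show ?thesis unfolding vsm[OF jm] vsm[OF lm] .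
  qed
  define G where "G = {{i,j} | i j. i<j \<and> j<m \<and> {v i, v j, v m} \<in> H}"
  have Gmem: "({a,b} \<in> G) = (b < m \<and> {v a, v b, v m} \<in> H)" if ab: "a < b" for a b
  proof
    assume "{a,b} \<in> G"
    then obtain i j where ij: "{a,b} = {i,j}" "i<j" "j<m" "{v i, v j, v m} \<in> H" unfolding G_def by auto
    then have "a = i \<and> b = j" using pair_sorted_eq[OF ab ij(2) ij(1)] by simp
    then show "b < m \<and> {v a, v b, v m} \<in> H" using ij by simp
  next
    assume "b < m \<and> {v a, v b, v m} \<in> H"
    then show "{a,b} \<in> G" unfolding G_def using ab by auto
  qed
  have unifG: "uniform_hypergraph 2 m G"
    unfolding uniform_hypergraph_def G_def by auto
  have freeG: "clique_free 2 (t-1) G {..<m}"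
    unfolding clique_free_def
  proof
    assume "\<exists>S0. S0 \<subseteq> {..<m} \<and> finite S0 \<and> card S0 = t - 1 \<and> is_clique 2 G S0"
    then obtain S0 where S0: "S0 \<subseteq> {..<m}" "finite S0" "card S0 = t - 1" "is_clique 2 G S0" by auto
    define S1 where "S1 = v ` insert m S0"
    have sub1: "insert m S0 \<subseteq> {..m}" using S0(1) by auto
    have mS0: "m \<notin> S0" using S0(1) by auto
    have cS1: "card S1 = t" unfolding S1_def
      using card_image[OF inj_on_subset[OF vinj sub1]] S0(2,3) mS0 st by simp
    have S1n: "S1 \<subseteq> {..<n}" unfolding S1_def using sub1 vlt by auto
    have fS1: "finite S1" unfolding S1_def using S0(2) by simp
    have cl: "is_clique 3 H S1"
      unfolding is_clique_def
    proof (intro allI impI)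
      fix e assume e: "e \<subseteq> S1 \<and> card e = 3"
      define I where "I = {i \<in> insert m S0. v i \<in> e}"
      have eI: "e = v ` I" unfolding I_def using e unfolding S1_def by auto
      have "card I = 3" using e eI card_image[OF inj_on_subset[OF vinj], of I] sub1 unfolding I_def by auto
      then obtain a b c where abc: "a<b" "b<c" "I = {a,b,c}" using card3_sorted by blast
      have cm: "c \<le> m" using abc sub1 unfolding I_def by auto
      have aS: "a \<in> S0" using abc cm unfolding I_def by auto
      have bS: "b \<in> S0" using abc cm unfolding I_def by auto
      have "{a,b} \<subseteq> S0" "card {a,b} = 2" using aS bS abc by auto
      then have "{a,b} \<in> G" using S0(4) unfolding is_clique_def by blast
      then have bm: "{v a, v b, v m} \<in> H" using Gmem[OF abc(1)] by simp
      have "{v a, v b, v c} \<in> H"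
      proof (cases "c = m")
        case True then show ?thesis using bm by simp
      next
        case False then have "c < m" using cm by simp
        then show ?thesis using key[OF abc(1) abc(2)] bm by simp
      qed
      then show "e \<in> H" using eI abc(3) by simp
    qed
    then show False using freeH S1n fS1 cS1 unfolding clique_free_def by auto
  qed
  have er2: "erdos_rogers 2 (s-1) (t-1) m \<le> max_free_set 2 (s-1) m G"
    by (rule er_le[OF unifG freeG])
  obtain W where W: "W \<subseteq> {..<m}" "clique_free 2 (s-1) G W" "card W = max_free_set 2 (s-1) m G"
  proof -
    have "1 \<le> s - 1" using s3 by simp
    from mfs_obtain[OF this, of m 2 G] show ?thesis using that by auto
  qed
  define W' where "W' = v ` W"
  have Wsub: "W \<subseteq> {..m}" using W(1) by auto
  have cW': "card W' = card W" unfolding W'_def by (rule card_image[OF inj_on_subset[OF vinj Wsub]])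
  have W'n: "W' \<subseteq> {..<n}" unfolding W'_def using Wsub vlt by auto
  have freeW': "clique_free 3 s H W'"
    unfolding clique_free_def
  proof
    assume "\<exists>S2. S2 \<subseteq> W' \<and> finite S2 \<and> card S2 = s \<and> is_clique 3 H S2"
    then obtain S2 where S2: "S2 \<subseteq> W'" "finite S2" "card S2 = s" "is_clique 3 H S2" by auto
    define A where "A = {i \<in> W. v i \<in> S2}"
    have AW: "A \<subseteq> W" unfolding A_def by auto
    have S2A: "S2 = v ` A" unfolding A_def using S2(1) unfolding W'_def by auto
    have finW: "finite W" using W(1) finite_subset by auto
    have fA: "finite A" using AW finW finite_subset by auto
    have cA: "card A = s" using S2(3) S2A card_image[OF inj_on_subset[OF vinj], of A] AW Wsub by auto
    then have Ane: "A \<noteq> {}" using s3 by auto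
    define c where "c = Max A"
    have cA': "c \<in> A" unfolding c_def using Max_in[OF fA Ane] .
    define A' where "A' = A - {c}"
    have cardA': "card A' = s - 1" unfolding A'_def using cA' cA fA by simp
    have A'W: "A' \<subseteq> W" unfolding A'_def using AW by auto
    have clA': "is_clique 2 G A'"
      unfolding is_clique_def
    proof (intro allI impI)
      fix e assume e: "e \<subseteq> A' \<and> card e = 2"
      then obtain a b where ab: "a < b" "e = {a,b}" using card2_sorted by blast
      have aA: "a \<in> A" "a \<noteq> c" and bA: "b \<in> A" "b \<noteq> c" using e ab unfolding A'_def by auto
      have "b \<le> c" unfolding c_def using Max_ge[OF fA bA(1)] .
      then have bc: "b < c" using bA(2) by simp
      have cm: "c < m" using cA' AW W(1) by auto
      have "{v a, v b, v c} \<subseteq> S2" using aA(1) bA(1) cA' S2A by auto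
      moreover have "card {v a, v b, v c} = 3"
      proof -
        have "{a,b,c} \<subseteq> {..m}" using ab bc cm by auto
        then have "card (v ` {a,b,c}) = card {a,b,c}" using card_image[OF inj_on_subset[OF vinj]] by blast
        then show ?thesis using ab bc by simp
      qed
      ultimately have "{v a, v b, v c} \<in> H" using S2(4) unfolding is_clique_def by blast
      then have "{v a, v b, v m} \<in> H" using key[OF ab(1) bc] cm by simp
      then have "{a,b} \<in> G" using Gmem[OF ab(1)] bc cm by simp
      then show "e \<in> G" using ab by simp
    qed
    have "finite A'" using fA unfolding A'_def by simp
    then show False using W(2) A'W cardA' clA' unfolding clique_free_def by auto
  qed
  have "card W' \<le> max_free_set 3 s n H" by (rule mfs_ge[OF W'n freeW'])
  then show ?thesis using er2 cW' W(3) by simp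
qed


definition E_of :: "(nat \<times> nat \<Rightarrow> nat) \<Rightarrow> nat \<Rightarrow> nat set set" where
  "E_of \<chi> n = {{a,b,c} | a b c. a<b \<and> b<c \<and> c<n \<and> \<chi> (a,b) \<noteq> \<chi> (a,c)}"

lemma E_mem:
  assumes "a<b" "b<c"
  shows "({a,b,c} \<in> E_of \<chi> n) = (c<n \<and> \<chi> (a,b) \<noteq> \<chi> (a,c))"
proof
  assume "{a,b,c} \<in> E_of \<chi> n"
  then obtain a' b' c' where h: "{a,b,c} = {a',b',c'}" "a'<b'" "b'<c'" "c'<n" "\<chi> (a',b') \<noteq> \<chi> (a',c')"
    unfolding E_of_def by auto
  from sorted3_eq[OF assms h(2,3,1)] h(4,5) show "c<n \<and> \<chi> (a,b) \<noteq> \<chi> (a,c)" by simp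
next
  assume "c<n \<and> \<chi> (a,b) \<noteq> \<chi> (a,c)"
  then show "{a,b,c} \<in> E_of \<chi> n" unfolding E_of_def using assms by auto
qed

lemma E_unif: "uniform_hypergraph 3 n (E_of \<chi> n)"
  unfolding uniform_hypergraph_def E_of_def by auto

lemma E_free:
  assumes col: "\<And>a b. a < b \<Longrightarrow> b < n \<Longrightarrow> \<chi> (a,b) < s - 1" and st: "s < t" and s2: "2 \<le> s"
  shows "clique_free 3 t (E_of \<chi> n) {..<n}"
  unfolding clique_free_def
proof
  assume "\<exists>S. S \<subseteq> {..<n} \<and> finite S \<and> card S = t \<and> is_clique 3 (E_of \<chi> n) S"
  then obtain S where S: "S \<subseteq> {..<n}" "finite S" "card S = t" "is_clique 3 (E_of \<chi> n) S" by auto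
  have Sne: "S \<noteq> {}" using S(3) st by auto
  define a where "a = Min S"
  have aS: "a \<in> S" unfolding a_def using Min_in[OF S(2) Sne] .
  define T where "T = S - {a}"
  have cT: "card T = t - 1" unfolding T_def using aS S(2,3) by simp
  have Tgt: "b \<in> T \<Longrightarrow> a < b" for b unfolding T_def a_def using Min_le[OF S(2)] by fastforce
  have im: "(\<lambda>b. \<chi> (a,b)) ` T \<subseteq> {..<s-1}"
  proof
    fix z assume "z \<in> (\<lambda>b. \<chi> (a,b)) ` T"
    then obtain b where b: "b \<in> T" "z = \<chi> (a,b)" by auto
    have "b < n" using b(1) S(1) unfolding T_def by auto
    then show "z \<in> {..<s-1}" using col[OF Tgt[OF b(1)]] b(2) by simp
  qed
  have "\<not> inj_on (\<lambda>b. \<chi> (a,b)) T"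
  proof
    assume "inj_on (\<lambda>b. \<chi> (a,b)) T"
    then have "card T \<le> card {..<s-1}" using card_inj_on_le[OF _ im] by simp
    then have "t - 1 \<le> s - 1" using cT by simp
    then show False using st s2 by linarith
  qed
  then obtain b c where bc: "b \<in> T" "c \<in> T" "b \<noteq> c" "\<chi> (a,b) = \<chi> (a,c)" unfolding inj_on_def by auto
  have main: "False" if "b \<in> T" "c \<in> T" "b < c" "\<chi> (a,b) = \<chi> (a,c)" for b c
  proof -
    have ab: "a < b" using Tgt[OF that(1)] .
    have "{a,b,c} \<subseteq> S" using aS that(1,2) unfolding T_def by auto
    moreover have "card {a,b,c} = 3" using ab that(3) by auto
    ultimately have "{a,b,c} \<in> E_of \<chi> n" using S(4) unfolding is_clique_def by auto
    then show False using E_mem[OF ab that(3)] that(4) by simp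
  qed
  show False
  proof (cases "b < c")
    case True then show ?thesis using main bc by blast
  next
    case False then have "c < b" using bc(3) by simp
    then show ?thesis using main[of c b] bc by simp
  qed
qed

lemma clique_from_seq:
  fixes x :: "nat \<Rightarrow> nat"
  assumes mono: "\<And>k l. k < l \<Longrightarrow> l < s \<Longrightarrow> x k < x l" and xn: "\<And>l. l < s \<Longrightarrow> x l < n"
    and good: "\<And>k l. k < l \<Longrightarrow> l < s \<Longrightarrow> \<chi> (x k, x l) = l - 1"
  shows "is_clique 3 (E_of \<chi> n) (x ` {..<s})"
  unfolding is_clique_def
proof (intro allI impI)
  fix e assume e: "e \<subseteq> x ` {..<s} \<and> card e = 3"
  have inj: "inj_on x {..<s}"
  proof (rule inj_onI)
    fix k l assume "k \<in> {..<s}" "l \<in> {..<s}" "x k = x l"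
    then show "k = l" using mono by (metis lessThan_iff linorder_neqE_nat order_less_irrefl)
  qed
  define I where "I = {i \<in> {..<s}. x i \<in> e}"
  have eI: "e = x ` I" unfolding I_def using e by auto
  have "card I = 3" using e eI card_image[OF inj_on_subset[OF inj], of I] unfolding I_def by auto
  then obtain a b c where abc: "a<b" "b<c" "I = {a,b,c}" using card3_sorted by blast
  have cs: "c < s" using abc unfolding I_def by auto
  have "x a < x b" "x b < x c" using mono abc cs by auto
  moreover have "x c < n" using xn cs .
  moreover have "\<chi> (x a, x b) \<noteq> \<chi> (x a, x c)" using good[of a b] good[of a c] abc cs by simp
  ultimately have "{x a, x b, x c} \<in> E_of \<chi> n" using E_mem by blast
  then show "e \<in> E_of \<chi> n" using eI abc by simp
qed


lemma idx_upper:
  fixes i j l s q :: nat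
  assumes "i<q" "j<q" "l<s"
  shows "l*(s*q) + i + l*j < Suc l * (s*q)"
proof -
  have "l*j \<le> l*q" using assms(2) by simp
  then have "l*(s*q) + i + l*j < l*(s*q) + q + l*q" using assms(1) by linarith
  also have "\<dots> = l*(s*q) + Suc l * q" by simp
  also have "\<dots> \<le> l*(s*q) + s*q" using assms(3) by (intro add_left_mono mult_le_mono1) simp
  also have "\<dots> = Suc l * (s*q)" by simp
  finally show ?thesis .
qed

lemma block_eq:
  fixes a b m x :: nat
  assumes "a*m \<le> x" "x < Suc a * m" "b*m \<le> x" "x < Suc b * m"
  shows "a = b"
proof (rule ccontr)
  assume "a \<noteq> b"
  then consider "a < b" | "b < a" by linarith
  then show False
  proof cases
    case 1 then have "Suc a * m \<le> b * m" by (intro mult_le_mono1) simp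
    then show False using assms by linarith
  next
    case 2 then have "Suc b * m \<le> a * m" by (intro mult_le_mono1) simp
    then show False using assms by linarith
  qed
qed

lemma lin2:
  fixes i j i' j' k l :: nat
  assumes "k<l" "i + k*j = i' + k*j'" "i + l*j = i' + l*j'"
  shows "j = j'"
proof -
  from less_imp_Suc_add[OF assms(1)] obtain d where d: "l = Suc (k + d)" by blast
  have e1: "l*j = k*j + Suc d * j" unfolding d by (simp add: algebra_simps)
  have e2: "l*j' = k*j' + Suc d * j'" unfolding d by (simp add: algebra_simps)
  have eq: "Suc d * j = Suc d * j'" using assms(2,3) e1 e2 by linarith
  have "Suc d \<noteq> 0" by simp
  then have "(Suc d * j = Suc d * j') = (j = j')" by (rule mult_left_cancel)
  from iffD1[OF this eq] show ?thesis .
qed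

lemma sorted_enum:
  assumes "finite W"
  shows "\<forall>i j. i < j \<longrightarrow> j < card W \<longrightarrow> sorted_list_of_set W ! i < sorted_list_of_set W ! j"
    and "\<forall>i. i < card W \<longrightarrow> sorted_list_of_set W ! i \<in> W"
proof -
  have st: "sorted_wrt (<) (sorted_list_of_set W)" by (rule strict_sorted_list_of_set)
  have len: "length (sorted_list_of_set W) = card W" by simp
  show "\<forall>i j. i < j \<longrightarrow> j < card W \<longrightarrow> sorted_list_of_set W ! i < sorted_list_of_set W ! j"
    using sorted_wrt_nth_less[OF st] len by auto
  show "\<forall>i. i < card W \<longrightarrow> sorted_list_of_set W ! i \<in> W"
    using nth_mem[of _ "sorted_list_of_set W"] len assms by auto
qed


definition idx :: "nat \<Rightarrow> nat \<Rightarrow> nat \<times> nat \<Rightarrow> nat \<Rightarrow> nat" where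
  "idx s q \<tau> l = l*(s*q) + fst \<tau> + l * snd \<tau>"

lemma idx_props:
  assumes "\<tau> \<in> {..<q} \<times> {..<q}" "l < s"
  shows "l*(s*q) \<le> idx s q \<tau> l" "idx s q \<tau> l < Suc l * (s*q)" "idx s q \<tau> l < s*s*q"
proof -
  show "l*(s*q) \<le> idx s q \<tau> l" unfolding idx_def by simp
  show 1: "idx s q \<tau> l < Suc l * (s*q)" unfolding idx_def using idx_upper[of "fst \<tau>" q "snd \<tau>" l s] assms by auto
  have "Suc l * (s*q) \<le> s * (s*q)" using assms(2) by (intro mult_le_mono1) simp
  then show "idx s q \<tau> l < s*s*q" using 1 by (simp add: mult.assoc)
qed

lemma idx_mono:
  assumes "\<tau> \<in> {..<q} \<times> {..<q}" "k < l" "l < s"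
  shows "idx s q \<tau> k < idx s q \<tau> l"
proof -
  have "idx s q \<tau> k < Suc k * (s*q)" using idx_props(2)[OF assms(1)] assms(2,3) by simp
  also have "\<dots> \<le> l * (s*q)" using assms(2) by (intro mult_le_mono1) simp
  also have "\<dots> \<le> idx s q \<tau> l" using idx_props(1)[OF assms(1,3)] .
  finally show ?thesis .
qed

lemma idx_inj:
  assumes "\<tau> \<in> {..<q} \<times> {..<q}" "\<tau>' \<in> {..<q} \<times> {..<q}" "k < l" "l < s" "k' < l'" "l' < s"
    "idx s q \<tau> k = idx s q \<tau>' k'" "idx s q \<tau> l = idx s q \<tau>' l'"
  shows "\<tau> = \<tau>'"
proof -
  have kk: "k = k'"
    using block_eq[OF idx_props(1)[OF assms(1)] idx_props(2)[OF assms(1)]] idx_props(1,2)[OF assms(2)] assms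
    by (metis order.strict_trans)
  have ll: "l = l'"
    using block_eq[OF idx_props(1)[OF assms(1)] idx_props(2)[OF assms(1)]] idx_props(1,2)[OF assms(2)] assms
    by metis
  have e1: "fst \<tau> + k * snd \<tau> = fst \<tau>' + k * snd \<tau>'" using assms(7) kk unfolding idx_def by simp
  have e2: "fst \<tau> + l * snd \<tau> = fst \<tau>' + l * snd \<tau>'" using assms(8) ll unfolding idx_def by simp
  have "snd \<tau> = snd \<tau>'" by (rule lin2[OF assms(3) e1 e2])
  moreover then have "fst \<tau> = fst \<tau>'" using e1 by simp
  ultimately show ?thesis by (simp add: prod_eq_iff)
qed

lemma bad_W_count:
  fixes s n q :: nat and W :: "nat set"
  assumes s3: "3 \<le> s" and Wn: "W \<subseteq> {..<n}" and cW: "card W = s*s*q"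
  shows "real (card {\<chi> \<in> PiE {(a,b). a<b \<and> b<n} (\<lambda>_. {..<s-1}). clique_free 3 s (E_of \<chi> n) W})
     \<le> real (card (PiE {(a,b). a<b \<and> b<n} (\<lambda>_. {..<s-1}))) * (1 - 1 / real (s-1)^(s*s))^(q*q)"
proof -
  define A where "A = {(a,b). a<b \<and> b<n}"
  define K where "K = {..<s-1}"
  define \<rho> where "\<rho> = 1 - 1 / real (s-1)^(s*s)"
  define T where "T = {..<q} \<times> {..<q}"
  define y where "y = (\<lambda>i. sorted_list_of_set W ! i)"
  define x where "x = (\<lambda>\<tau> l. y (idx s q \<tau> l))"
  define D where "D = (\<lambda>\<tau>. (\<lambda>p. (x \<tau> (fst p), x \<tau> (snd p))) ` {p. fst p < snd p \<and> snd p < s})"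
  define G where "G = (\<lambda>\<tau> (\<chi>::nat\<times>nat\<Rightarrow>nat). \<forall>k l. k < l \<longrightarrow> l < s \<longrightarrow> \<chi> (x \<tau> k, x \<tau> l) = l - 1)"
  have finW: "finite W" using Wn finite_subset by blast
  have ymono: "y i < y j" if "i < j" "j < s*s*q" for i j
    using sorted_enum(1)[OF finW] that cW unfolding y_def by auto
  have yW: "y i \<in> W" if "i < s*s*q" for i
    using sorted_enum(2)[OF finW] that cW unfolding y_def by auto
  have xmono: "x \<tau> k < x \<tau> l" if "\<tau> \<in> T" "k < l" "l < s" for \<tau> k l
    unfolding x_def using ymono idx_mono[of \<tau> q k l s] idx_props(3)[of \<tau> q l s] that unfolding T_def by blast
  have xW: "x \<tau> l \<in> W" if "\<tau> \<in> T" "l < s" for \<tau> l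
    unfolding x_def using yW idx_props(3)[of \<tau> q l s] that unfolding T_def by blast
  have xn: "x \<tau> l < n" if "\<tau> \<in> T" "l < s" for \<tau> l
    using xW[OF that] Wn by auto
  have xinj: "k = l" if "\<tau> \<in> T" "k < s" "l < s" "x \<tau> k = x \<tau> l" for \<tau> k l
  proof (rule ccontr)
    assume "k \<noteq> l"
    then consider "k < l" | "l < k" by linarith
    then show False using xmono[OF that(1)] that by (cases) fastforce+
  qed
  have finA: "finite A"
  proof -
    have "A \<subseteq> {..<n} \<times> {..<n}" unfolding A_def by auto
    then show ?thesis by (rule finite_subset) simp
  qed
  have "0 \<in> K" unfolding K_def using s3 by simp
  have fK: "finite K" unfolding K_def by simp
  have neK: "K \<noteq> {}" using \<open>0 \<in> K\<close> by blast
  note finK = fK neK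
  have finT: "finite T" unfolding T_def by simp
  have DA: "D \<tau> \<subseteq> A" if "\<tau> \<in> T" for \<tau>
  proof
    fix p assume "p \<in> D \<tau>"
    then obtain k l where kl: "k < l" "l < s" "p = (x \<tau> k, x \<tau> l)" unfolding D_def by auto
    then show "p \<in> A" unfolding A_def using xmono[OF that kl(1,2)] xn[OF that kl(2)] by simp
  qed
  have Ddisj: "D \<tau> \<inter> D \<tau>' = {}" if "\<tau> \<in> T" "\<tau>' \<in> T" "\<tau> \<noteq> \<tau>'" for \<tau> \<tau>'
  proof (rule ccontr)
    assume "D \<tau> \<inter> D \<tau>' \<noteq> {}"
    then obtain p where "p \<in> D \<tau>" "p \<in> D \<tau>'" by blast
    then obtain k l k' l' where kl: "k < l" "l < s" "p = (x \<tau> k, x \<tau> l)"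
      and kl': "k' < l'" "l' < s" "p = (x \<tau>' k', x \<tau>' l')" unfolding D_def by auto
    have yinj: "i = j" if "i < s*s*q" "j < s*s*q" "y i = y j" for i j
    proof (rule ccontr)
      assume "i \<noteq> j"
      then consider "i < j" | "j < i" by linarith
      then show False using ymono that by (cases) fastforce+
    qed
    have i1: "idx s q \<tau> k = idx s q \<tau>' k'"
      using yinj[OF idx_props(3)[of \<tau> q k s] idx_props(3)[of \<tau>' q k' s]] kl kl' that
      unfolding x_def T_def by auto
    have i2: "idx s q \<tau> l = idx s q \<tau>' l'"
      using yinj[OF idx_props(3)[of \<tau> q l s] idx_props(3)[of \<tau>' q l' s]] kl kl' that
      unfolding x_def T_def by auto
    have "\<tau> = \<tau>'" using idx_inj[OF _ _ kl(1,2) kl'(1,2) i1 i2] that unfolding T_def by blast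
    then show False using that(3) by simp
  qed
  have Gdep: "G \<tau> f = G \<tau> g" if "\<tau> \<in> T" "\<forall>z\<in>D \<tau>. f z = g z" for \<tau> f g
  proof -
    have "f (x \<tau> k, x \<tau> l) = g (x \<tau> k, x \<tau> l)" if "k < l" "l < s" for k l
    proof -
      have "(x \<tau> k, x \<tau> l) \<in> D \<tau>" unfolding D_def using that by (intro image_eqI[of _ _ "(k,l)"]) auto
      then show ?thesis using \<open>\<forall>z\<in>D \<tau>. f z = g z\<close> by blast
    qed
    then show ?thesis unfolding G_def by auto
  qed
  have Gcount: "real (card {h\<in>PiE (D \<tau>) (\<lambda>_. K). \<not> G \<tau> h}) \<le> \<rho> * real (card (PiE (D \<tau>) (\<lambda>_. K)))"
    if \<tau>T: "\<tau> \<in> T" for \<tau>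
  proof -
    define h0 where "h0 = restrict (\<lambda>p. (THE l. l < s \<and> x \<tau> l = snd p) - 1) (D \<tau>)"
    have the_l: "(THE l'. l' < s \<and> x \<tau> l' = x \<tau> l) = l" if "l < s" for l
      using xinj[OF \<tau>T] that by (intro the_equality) auto
    have h0v: "h0 (x \<tau> k, x \<tau> l) = l - 1" if "k < l" "l < s" for k l
    proof -
      have "(x \<tau> k, x \<tau> l) \<in> D \<tau>" unfolding D_def using that by (intro image_eqI[of _ _ "(k,l)"]) auto
      then show ?thesis unfolding h0_def using the_l[OF that(2)] by simp
    qed
    have h0P: "h0 \<in> PiE (D \<tau>) (\<lambda>_. K)"
    proof -
      have "h0 p \<in> K" if "p \<in> D \<tau>" for p
      proof -
        obtain k l where kl: "k < l" "l < s" "p = (x \<tau> k, x \<tau> l)" using \<open>p \<in> D \<tau>\<close> unfolding D_def by auto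
        then show ?thesis using h0v[OF kl(1,2)] unfolding K_def by simp
      qed
      then show ?thesis unfolding h0_def PiE_def Pi_def by auto
    qed
    have h0G: "G \<tau> h0" unfolding G_def using h0v by simp
    have finD: "finite (D \<tau>)" unfolding D_def
    proof -
      have "{p. fst p < snd p \<and> snd p < s} \<subseteq> {..<s} \<times> {..<s}" by auto
      then have "finite {p::nat\<times>nat. fst p < snd p \<and> snd p < s}" by (rule finite_subset) simp
      then show "finite ((\<lambda>p. (x \<tau> (fst p), x \<tau> (snd p))) ` {p. fst p < snd p \<and> snd p < s})" by simp
    qed
    have cardD: "card (D \<tau>) \<le> s*s"
    proof -
      have sub: "{p. fst p < snd p \<and> snd p < s} \<subseteq> {..<s} \<times> {..<s}" by auto
      have "card (D \<tau>) \<le> card {p::nat\<times>nat. fst p < snd p \<and> snd p < s}" unfolding D_def by (rule card_image_le) (rule finite_subset[OF sub], simp)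
      also have "\<dots> \<le> card ({..<s} \<times> {..<s})" by (rule card_mono[OF _ sub]) simp
      finally show ?thesis by (simp add: card_cartesian_product)
    qed
    have finP: "finite (PiE (D \<tau>) (\<lambda>_. K))" using finD finK(1) by (rule finite_PiE)
    have cP: "card (PiE (D \<tau>) (\<lambda>_. K)) = (s-1)^(card (D \<tau>))"
      using finD unfolding K_def by (simp add: card_PiE)
    have "{h\<in>PiE (D \<tau>) (\<lambda>_. K). \<not> G \<tau> h} \<subseteq> PiE (D \<tau>) (\<lambda>_. K) - {h0}" using h0G by auto
    then have "card {h\<in>PiE (D \<tau>) (\<lambda>_. K). \<not> G \<tau> h} \<le> card (PiE (D \<tau>) (\<lambda>_. K) - {h0})"
      by (rule card_mono[OF finite_Diff[OF finP]])
    also have "\<dots> = card (PiE (D \<tau>) (\<lambda>_. K)) - 1" using h0P finP by simp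
    finally have c1: "card {h\<in>PiE (D \<tau>) (\<lambda>_. K). \<not> G \<tau> h} \<le> (s-1)^(card (D \<tau>)) - 1" using cP by simp
    have pos: "(1::nat) \<le> (s-1)^(card (D \<tau>))" using s3 by simp
    have le: "real (s-1)^(card (D \<tau>)) \<le> real (s-1)^(s*s)"
      using cardD s3 by (intro power_increasing) auto
    have ppos: "real (s-1)^(s*s) > 0" using s3 by simp
    have "real (card {h\<in>PiE (D \<tau>) (\<lambda>_. K). \<not> G \<tau> h}) \<le> real ((s-1)^(card (D \<tau>)) - 1)"
      using c1 by (simp only: of_nat_le_iff)
    also have "\<dots> = real (s-1)^(card (D \<tau>)) - 1" using pos by (simp add: of_nat_diff)
    also have "\<dots> \<le> \<rho> * real (s-1)^(card (D \<tau>))"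
    proof -
      have "real (s-1)^(card (D \<tau>)) / real (s-1)^(s*s) \<le> 1" using le ppos by simp
      then show ?thesis unfolding \<rho>_def by (simp add: algebra_simps)
    qed
    finally show ?thesis using cP by simp
  qed
  have main: "real (card {f\<in>PiE A (\<lambda>_. K). \<forall>\<tau>\<in>T. \<not> G \<tau> f}) \<le> real (card (PiE A (\<lambda>_. K))) * \<rho> ^ card T"
    by (rule count_indep[OF finA finT finK(1) finK(2) DA Ddisj Gdep Gcount])
  have sub: "{\<chi> \<in> PiE A (\<lambda>_. K). clique_free 3 s (E_of \<chi> n) W} \<subseteq> {f\<in>PiE A (\<lambda>_. K). \<forall>\<tau>\<in>T. \<not> G \<tau> f}"
  proof
    fix \<chi> assume h: "\<chi> \<in> {\<chi> \<in> PiE A (\<lambda>_. K). clique_free 3 s (E_of \<chi> n) W}"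
    have "\<not> G \<tau> \<chi>" if \<tau>T: "\<tau> \<in> T" for \<tau>
    proof
      assume g: "G \<tau> \<chi>"
      have cl: "is_clique 3 (E_of \<chi> n) (x \<tau> ` {..<s})"
        by (rule clique_from_seq) (use xmono[OF \<tau>T] xn[OF \<tau>T] g in \<open>auto simp: G_def\<close>)
      have inj: "inj_on (x \<tau>) {..<s}" using xinj[OF \<tau>T] by (auto intro: inj_onI)
      have "card (x \<tau> ` {..<s}) = s" using card_image[OF inj] by simp
      moreover have "x \<tau> ` {..<s} \<subseteq> W" using xW[OF \<tau>T] by auto
      ultimately show False using h cl unfolding clique_free_def by auto
    qed
    then show "\<chi> \<in> {f\<in>PiE A (\<lambda>_. K). \<forall>\<tau>\<in>T. \<not> G \<tau> f}" using h by auto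
  qed
  have finPA: "finite (PiE A (\<lambda>_. K))" using finA finK(1) by (rule finite_PiE)
  have "card {\<chi> \<in> PiE A (\<lambda>_. K). clique_free 3 s (E_of \<chi> n) W} \<le> card {f\<in>PiE A (\<lambda>_. K). \<forall>\<tau>\<in>T. \<not> G \<tau> f}"
    by (rule card_mono[OF _ sub]) (use finPA in auto)
  then have "real (card {\<chi> \<in> PiE A (\<lambda>_. K). clique_free 3 s (E_of \<chi> n) W}) \<le> real (card (PiE A (\<lambda>_. K))) * \<rho> ^ card T"
    using main by linarith
  moreover have "card T = q*q" unfolding T_def by (simp add: card_cartesian_product)
  ultimately show ?thesis unfolding A_def K_def \<rho>_def by simp
qed

lemma clique_free_mono: "clique_free k s E W \<Longrightarrow> W0 \<subseteq> W \<Longrightarrow> clique_free k s E W0"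
  unfolding clique_free_def by auto

lemma upper_comb:
  fixes s t n q :: nat
  assumes s3: "3 \<le> s" and st: "s < t"
    and small: "real (n choose (s*s*q)) * (1 - 1/real(s-1)^(s*s))^(q*q) < 1"
  shows "erdos_rogers 3 s t n < s*s*q"
proof -
  define A where "A = {(a,b). a<b \<and> b<(n::nat)}"
  define K where "K = {..<s-1}"
  define \<rho> where "\<rho> = (1 - 1/real(s-1)^(s*s))^(q*q)"
  define w where "w = s*s*q"
  define WW where "WW = {W. W \<subseteq> {..<n} \<and> card W = w}"
  define P where "P = PiE A (\<lambda>_. K)"
  define Bad where "Bad = (\<lambda>W. {\<chi> \<in> P. clique_free 3 s (E_of \<chi> n) W})"
  have finA: "finite A"
  proof -
    have "A \<subseteq> {..<n} \<times> {..<n}" unfolding A_def by auto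
    then show ?thesis by (rule finite_subset) simp
  qed
  have finP: "finite P" unfolding P_def K_def using finA by (intro finite_PiE) auto
  have "0 \<in> K" unfolding K_def using s3 by simp
  then have Pne: "P \<noteq> {}" unfolding P_def by (auto simp: PiE_eq_empty_iff)
  have cPpos: "card P > 0" using finP Pne by (simp add: card_gt_0_iff)
  have finWW: "finite WW" unfolding WW_def by (rule finite_subset[of _ "Pow {..<n}"]) auto
  have cWW: "card WW = n choose w" unfolding WW_def using n_subsets[of "{..<n}" w] by simp
  have bw: "real (card (Bad W)) \<le> real (card P) * \<rho>" if "W \<in> WW" for W
    using bad_W_count[OF s3, of W n q] that unfolding Bad_def P_def A_def K_def \<rho>_def WW_def w_def by simp
  have "card (\<Union>W\<in>WW. Bad W) \<le> (\<Sum>W\<in>WW. card (Bad W))" by (rule card_UN_le[OF finWW])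
  then have "real (card (\<Union>W\<in>WW. Bad W)) \<le> real (\<Sum>W\<in>WW. card (Bad W))"
    by (simp only: of_nat_le_iff)
  also have "\<dots> = (\<Sum>W\<in>WW. real (card (Bad W)))" by (rule of_nat_sum)
  also have "\<dots> \<le> (\<Sum>W\<in>WW. real (card P) * \<rho>)" using bw by (rule sum_mono)
  also have "\<dots> = real (card P) * (real (n choose w) * \<rho>)" using cWW by simp
  also have "\<dots> < real (card P) * 1" using small cPpos unfolding \<rho>_def w_def
    by (intro mult_strict_left_mono) auto
  finally have "card (\<Union>W\<in>WW. Bad W) < card P" by simp
  moreover have "(\<Union>W\<in>WW. Bad W) \<subseteq> P" unfolding Bad_def by auto
  then have "finite (\<Union>W\<in>WW. Bad W)" using finP finite_subset by blast
  ultimately have "\<not> P \<subseteq> (\<Union>W\<in>WW. Bad W)" using card_mono[of "\<Union>W\<in>WW. Bad W" P] by linarith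
  then obtain \<chi> where \<chi>P: "\<chi> \<in> P" and notbad: "\<And>W. W \<in> WW \<Longrightarrow> \<chi> \<notin> Bad W" by blast
  have col: "\<chi> (a,b) < s - 1" if "a < b" "b < n" for a b
  proof -
    have "(a,b) \<in> A" unfolding A_def using that by simp
    then show ?thesis using \<chi>P unfolding P_def K_def PiE_def Pi_def by auto
  qed
  have free: "clique_free 3 t (E_of \<chi> n) {..<n}" by (rule E_free[where \<chi>=\<chi> and n=n and s=s and t=t, OF col st]) (use s3 in auto)
  have erle: "erdos_rogers 3 s t n \<le> max_free_set 3 s n (E_of \<chi> n)" by (rule er_le[OF E_unif free])
  obtain W where W: "W \<subseteq> {..<n}" "clique_free 3 s (E_of \<chi> n) W" "card W = max_free_set 3 s n (E_of \<chi> n)"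
  proof -
    have "1 \<le> s" using s3 by simp
    from mfs_obtain[OF this, of n 3 "E_of \<chi> n"] show ?thesis using that by auto
  qed
  have "card W < w"
  proof (rule ccontr)
    assume "\<not> card W < w"
    then have "w \<le> card W" by simp
    then obtain W0 where W0: "W0 \<subseteq> W" "card W0 = w" by (rule obtain_subset_with_card_n)
    have "W0 \<in> WW" unfolding WW_def using W0 W(1) by auto
    moreover have "\<chi> \<in> Bad W0" unfolding Bad_def using \<chi>P clique_free_mono[OF W(2) W0(1)] by simp
    ultimately show False using notbad by blast
  qed
  then show ?thesis using erle W(3) unfolding w_def by simp
qed


lemma exp_bound: "4 \<le> k \<Longrightarrow> 2 * 2^k \<le> exp (real k)"
proof (induction k rule: dec_induct)
  case base
  have e1: "5/2 \<le> exp (1::real)" using exp_lower_Taylor_quadratic[of 1] by simp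
  have "(5/2::real)^4 \<le> exp 1 ^ 4" using e1 by (intro power_mono) auto
  also have "exp (1::real) ^ 4 = exp (real 4)" using exp_of_nat_mult[of 4 "1::real"] by simp
  finally have "(5/2::real)^4 \<le> exp (real 4)" .
  moreover have "(32::real) \<le> (5/2)^4" by (simp add: power_numeral_reduce)
  ultimately show ?case by simp
next
  case (step k)
  have e1: "2 \<le> exp (1::real)" using exp_lower_Taylor_quadratic[of 1] by simp
  have "exp (real (Suc k)) = exp (real k) * exp 1" by (simp add: exp_add[symmetric])
  moreover have "2 * 2 ^ k * 2 \<le> exp (real k) * exp 1" using step.IH e1 by (intro mult_mono) auto
  ultimately show ?case by simp
qed

lemma lower_final:
  assumes s3: "3 \<le> s" and st: "s < t" and n2: "2 \<le> n"
  shows "erdos_rogers 2 (s-1) (t-1) (nat \<lfloor>sqrt (ln (real n))\<rfloor>) \<le> erdos_rogers 3 s t n"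
proof -
  define m where "m = nat \<lfloor>sqrt (ln (real n))\<rfloor>"
  have lnpos: "ln (real n) > 0" using n2 by simp
  show ?thesis
  proof (cases "m \<le> 1")
    case True
    have u2: "uniform_hypergraph 2 m {}" unfolding uniform_hypergraph_def by simp
    have f2: "clique_free 2 (t-1) {} {..<m}"
    proof -
      have "\<not> is_clique 2 {} S" if "finite S" "card S = t - 1" for S
      proof -
        have "2 \<le> card S" using that st s3 by simp
        then obtain e where e: "e \<subseteq> S" "card e = 2" by (rule obtain_subset_with_card_n)
        then show ?thesis unfolding is_clique_def by auto
      qed
      then show ?thesis unfolding clique_free_def by auto
    qed
    have "erdos_rogers 2 (s-1) (t-1) m \<le> max_free_set 2 (s-1) m {}" by (rule er_le[OF u2 f2])
    also have "\<dots> \<le> m" by (rule mfs_le_n) (use s3 in simp)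
    also have "\<dots> \<le> 1" using True .
    also have "1 \<le> erdos_rogers 3 s t n"
    proof (rule er_ge)
      show "3 \<le> t" using s3 st by simp
      fix E assume "uniform_hypergraph 3 n E" "clique_free 3 t E {..<n}"
      have sub: "{0} \<subseteq> {..<n}" using n2 by auto
      have cf: "clique_free 3 s E {0}"
        unfolding clique_free_def
      proof
        assume "\<exists>S. S \<subseteq> {0} \<and> finite S \<and> card S = s \<and> is_clique 3 E S"
        then obtain S :: "nat set" where "S \<subseteq> {0}" "card S = s" by blast
        then have "s \<le> 1" using card_mono[of "{0::nat}" S] by simp
        then show False using s3 by simp
      qed
      show "1 \<le> max_free_set 3 s n E" using mfs_ge[OF sub cf] by simp
    qed
    finally show ?thesis unfolding m_def .
  next
    case False
    then have m2: "2 \<le> m" by simp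
    have "real m \<le> sqrt (ln (real n))" unfolding m_def using lnpos by simp
    then have "real m ^ 2 \<le> sqrt (ln (real n)) ^ 2" by (intro power_mono) auto
    then have mm: "real (m*m) \<le> ln (real n)" using lnpos by (simp add: power2_eq_square)
    have "4 \<le> m*m" using m2 mult_le_mono[OF m2 m2] by simp
    have "real (2 * 2^(tri m)) \<le> 2 * 2^(m*m)"
    proof -
      have "(2::real)^(tri m) \<le> 2^(m*m)" by (intro power_increasing tri_le) auto
      then show ?thesis by simp
    qed
    also have "\<dots> \<le> exp (real (m*m))" by (rule exp_bound) fact
    also have "\<dots> \<le> exp (ln (real n))" using mm by simp
    also have "\<dots> = real n" using n2 by simp
    finally have big: "2 * 2^(tri m) \<le> n" by (simp only: of_nat_le_iff)
    have "erdos_rogers 2 (s-1) (t-1) m \<le> erdos_rogers 3 s t n"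
    proof (rule er_ge)
      show "3 \<le> t" using s3 st by simp
      fix E assume "uniform_hypergraph 3 n E" "clique_free 3 t E {..<n}"
      then show "erdos_rogers 2 (s-1) (t-1) m \<le> max_free_set 3 s n E"
        using lower_main[OF _ _ s3 st big] by blast
    qed
    then show ?thesis unfolding m_def .
  qed
qed

lemma ln2_half: "1/2 \<le> ln (2::real)"
proof -
  have "ln (1/2::real) \<le> 1/2 - 1" by (rule ln_le_minus_one) simp
  moreover have "ln (1/2::real) = - ln 2" by (simp add: ln_div)
  ultimately show ?thesis by simp
qed

lemma upper_final:
  fixes s t n :: nat
  assumes s3: "3 \<le> s" and st: "s < t" and n2: "2 \<le> n"
  shows "real (erdos_rogers 3 s t n) \<le> (real s * real s * (real s * real s * real (s-1)^(s*s)) + 2 * real s * real s) * ln (real n)"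
proof -
  define R where "R = real (s-1)^(s*s)"
  define B where "B = real s * real s * R"
  define L where "L = ln (real n)"
  define q where "q = nat \<lfloor>B*L\<rfloor> + 1"
  define w where "w = s*s*q"
  define \<rho>0 where "\<rho>0 = 1 - 1/R"
  have Lpos: "L > 0" unfolding L_def using n2 by simp
  have Lhalf: "1/2 \<le> L"
  proof -
    have "ln (2::real) \<le> ln (real n)" using n2 by simp
    then show ?thesis using ln2_half unfolding L_def by linarith
  qed
  have R1: "1 \<le> R" unfolding R_def using s3 by (intro one_le_power) simp
  have Bnn: "0 \<le> B" unfolding B_def using R1 by simp
  have BL0: "0 \<le> B*L" using Bnn Lpos by simp
  have fl: "real (nat \<lfloor>B*L\<rfloor>) = of_int \<lfloor>B*L\<rfloor>" using BL0 by simp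
  have qgt: "B*L < real q" unfolding q_def using fl floor_correct[of "B*L"] by linarith
  have qle: "real q \<le> B*L + 1" unfolding q_def using fl floor_correct[of "B*L"] by linarith
  have qpos: "0 < real q" using qgt BL0 by linarith
  have h1: "real (n choose w) \<le> real n ^ w"
  proof (cases "w \<le> n")
    case True
    then have "n choose w \<le> n ^ w" by (rule binomial_le_pow)
    then show ?thesis by (metis of_nat_le_iff of_nat_power)
  next
    case False then have z: "real (n choose w) = 0" by simp
    have "0 \<le> real n ^ w" by simp
    then show ?thesis using z by linarith
  qed
  have h2: "real n ^ w = exp (real w * L)"
    unfolding L_def using n2 exp_of_nat_mult[of w "ln (real n)"] by simp
  have \<rho>nn: "0 \<le> \<rho>0" unfolding \<rho>0_def using R1 by simp
  have \<rho>le: "\<rho>0 \<le> exp (- (1/R))" unfolding \<rho>0_def using exp_ge_add_one_self[of "- (1/R)"] by simp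
  have h4: "\<rho>0^(q*q) \<le> exp (real (q*q) * (- (1/R)))"
  proof -
    have "\<rho>0^(q*q) \<le> exp (- (1/R))^(q*q)" using \<rho>nn \<rho>le by (intro power_mono) auto
    then show ?thesis using exp_of_nat_mult[of "q*q" "- (1/R)"] by simp
  qed
  have "real (n choose w) * \<rho>0^(q*q) \<le> exp (real w * L) * exp (real (q*q) * (- (1/R)))"
    using h1 h2 h4 \<rho>nn by (intro mult_mono) auto
  also have "\<dots> = exp (real q * (real s * real s * L - real q / R))"
    unfolding w_def by (simp add: exp_add[symmetric] algebra_simps)
  also have "\<dots> < 1"
  proof -
    have "B * L / R < real q / R" using qgt R1 by (intro divide_strict_right_mono) auto
    moreover have "B * L / R = real s * real s * L" unfolding B_def using R1 by simp
    ultimately have "real s * real s * L - real q / R < 0" by simp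
    then have "real q * (real s * real s * L - real q / R) < 0" using qpos by (simp add: mult_pos_neg)
    then show ?thesis by simp
  qed
  finally have small: "real (n choose (s*s*q)) * (1 - 1/real(s-1)^(s*s))^(q*q) < 1"
    unfolding w_def \<rho>0_def R_def .
  have "erdos_rogers 3 s t n < s*s*q" by (rule upper_comb[OF s3 st small])
  then have "erdos_rogers 3 s t n \<le> s*s*q" by (rule less_imp_le)
  then have "real (erdos_rogers 3 s t n) \<le> real (s*s*q)" by (simp only: of_nat_le_iff)
  also have "\<dots> = real s * real s * real q" by simp
  also have "\<dots> \<le> real s * real s * (B*L + 1)" using qle by (intro mult_left_mono) auto
  also have "\<dots> = real s * real s * B * L + real s * real s" by (simp add: algebra_simps)
  also have "\<dots> \<le> real s * real s * B * L + 2 * real s * real s * L"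
  proof -
    have "real s * real s * 1 \<le> real s * real s * (2 * L)" using Lhalf by (intro mult_left_mono) auto
    then show ?thesis by (simp add: algebra_simps)
  qed
  also have "\<dots> = (real s * real s * (real s * real s * real (s-1)^(s*s)) + 2 * real s * real s) * ln (real n)"
    unfolding B_def R_def L_def by (simp add: algebra_simps)
  finally show ?thesis .
qed

theorem theorem1:
  fixes s :: nat
  assumes "3 \<le> s"
  shows "\<exists>C::real. C > 0 \<and>
           (\<forall>t n. s < t \<longrightarrow> 2 \<le> n \<longrightarrow>
              erdos_rogers 2 (s - 1) (t - 1) (nat \<lfloor>sqrt (ln (real n))\<rfloor>) \<le> erdos_rogers 3 s t n
            \<and> real (erdos_rogers 3 s t n) \<le> C * ln (real n))"
proof (intro exI conjI allI impI)
  show "0 < real s * real s * (real s * real s * real (s-1)^(s*s)) + 2 * real s * real s"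
    using assms by (intro add_nonneg_pos) auto
next
  fix t n :: nat assume "s < t" "2 \<le> n"
  show "erdos_rogers 2 (s - 1) (t - 1) (nat \<lfloor>sqrt (ln (real n))\<rfloor>) \<le> erdos_rogers 3 s t n"
    by (rule lower_final[OF assms \<open>s < t\<close> \<open>2 \<le> n\<close>])
  show "real (erdos_rogers 3 s t n) \<le> (real s * real s * (real s * real s * real (s-1)^(s*s)) + 2 * real s * real s) * ln (real n)"
    by (rule upper_final[OF assms \<open>s < t\<close> \<open>2 \<le> n\<close>])
qed


end
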